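(* In the curved-exam game described in the context, let $\hat\alpha_n:=n\big(1-(\sum_{i=1}^n\frac1{n-\alpha_i})^{-1}\big)$, $\bar x^*:=1-\frac{nm}{n-1}\big(\frac1{\hat\alpha_n}-1\big)$, and $x_i^*:=\frac{(n-1)\alpha_i-n(1-\alpha_i)(m-\bar x^* )}{n-\alpha_i}$ for $i=1,\dots,n$. Then the profile $x^*=(x_1^*,\dots,x_n^* )$ is a curved interior pure Nash equilibrium (all $x_i^*>0$) if and only if $$\max_{1\le i\le n}\Big\{(n-\alpha_i)\Big(\frac{nm}{n-1}-J_i\Big)-\alpha_i\Big\}\ \le\ n(m-\bar x^* )\ <\ \frac{(n-1)\alpha_{(1)}}{1-\alpha_{(1)}},$$ where $\alpha_{(1)}:=\min_{1\le i\le n}\alpha_i$.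
   Context: The curved-exam game: fix $n\ge2$, abilities $\alpha_1,\dots,\alpha_n\in(0,1)$, target mean $m\in(0,1)$. Student $i$ chooses $x_i\in[0,1]$; $\bar x=\frac1n\sum_j x_j$, $\bar x_{-i}=\frac1{n-1}\sum_{j\ne i}x_j$. Grade $G_i(x)=x_i+\max(m-\bar x,0)$ (not truncated at 1); payoff $U_i(x)=G_i(x)^{\alpha_i}(1-x_i)^{1-\alpha_i}$. For each $i$, $J_i$ denotes the unique zero in $\big[\frac{nm-\alpha_i}{n-1},\frac{nm}{n-1}-\frac{\alpha_i}{n-\alpha_i}\big]$ of the strictly decreasing function $\phi_i(z)=\big(m+\frac{n-1}{n}(1-z)\big)^{\alpha_i}\big(1+\frac{nm}{n-1}-z\big)^{1-\alpha_i}-1$. *)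

theory Defs
  imports Complex_Main
begin

text \<open>Curved-exam game with n students indexed by 0,...,n-1.
  A profile is a function x :: nat => real, only its values on {..<n} matter.\<close>

definition avg :: "nat \<Rightarrow> (nat \<Rightarrow> real) \<Rightarrow> real" where
  "avg n x = (\<Sum>j<n. x j) / real n"

definition grade :: "nat \<Rightarrow> real \<Rightarrow> (nat \<Rightarrow> real) \<Rightarrow> nat \<Rightarrow> real" where
  "grade n m x i = x i + max (m - avg n x) 0"

definition payoff :: "nat \<Rightarrow> (nat \<Rightarrow> real) \<Rightarrow> real \<Rightarrow> (nat \<Rightarrow> real) \<Rightarrow> nat \<Rightarrow> real" where
  "payoff n \<alpha> m x i = grade n m x i powr \<alpha> i * (1 - x i) powr (1 - \<alpha> i)"

definition pure_NE :: "nat \<Rightarrow> (nat \<Rightarrow> real) \<Rightarrow> real \<Rightarrow> (nat \<Rightarrow> real) \<Rightarrow> bool" where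
  "pure_NE n \<alpha> m x \<longleftrightarrow>
     (\<forall>i<n. 0 \<le> x i \<and> x i \<le> 1) \<and>
     (\<forall>i<n. \<forall>y. 0 \<le> y \<longrightarrow> y \<le> 1 \<longrightarrow> payoff n \<alpha> m (x(i := y)) i \<le> payoff n \<alpha> m x i)"

definition curved_interior_NE :: "nat \<Rightarrow> (nat \<Rightarrow> real) \<Rightarrow> real \<Rightarrow> (nat \<Rightarrow> real) \<Rightarrow> bool" where
  "curved_interior_NE n \<alpha> m x \<longleftrightarrow>
     pure_NE n \<alpha> m x \<and> avg n x < m \<and> (\<forall>i<n. 0 < x i)"

definition phi :: "nat \<Rightarrow> real \<Rightarrow> real \<Rightarrow> real \<Rightarrow> real" where
  "phi n m a z = (m + (real n - 1) / real n * (1 - z)) powr a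
                 * (1 + real n * m / (real n - 1) - z) powr (1 - a) - 1"

definition J :: "nat \<Rightarrow> real \<Rightarrow> real \<Rightarrow> real" where
  "J n m a = (THE z. (real n * m - a) / (real n - 1) \<le> z
                   \<and> z \<le> real n * m / (real n - 1) - a / (real n - a)
                   \<and> phi n m a z = 0)"

definition alpha_hat :: "nat \<Rightarrow> (nat \<Rightarrow> real) \<Rightarrow> real" where
  "alpha_hat n \<alpha> = real n * (1 - 1 / (\<Sum>i<n. 1 / (real n - \<alpha> i)))"

definition xbar_star :: "nat \<Rightarrow> (nat \<Rightarrow> real) \<Rightarrow> real \<Rightarrow> real" where
  "xbar_star n \<alpha> m = 1 - real n * m / (real n - 1) * (1 / alpha_hat n \<alpha> - 1)"

definition x_star :: "nat \<Rightarrow> (nat \<Rightarrow> real) \<Rightarrow> real \<Rightarrow> nat \<Rightarrow> real" where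
  "x_star n \<alpha> m i = ((real n - 1) * \<alpha> i - real n * (1 - \<alpha> i) * (m - xbar_star n \<alpha> m))
                     / (real n - \<alpha> i)"

end

theory Submission
  imports Defs
begin


lemma ln_strict: fixes x :: real assumes "0 < x" "x \<noteq> 1" shows "ln x < x - 1"
proof -
  have s: "0 < sqrt x" using assms by simp
  have "ln x = 2 * ln (sqrt x)" using assms by (simp add: ln_sqrt)
  also have "\<dots> \<le> 2 * (sqrt x - 1)" using ln_le_minus_one[OF s] by simp
  also have "\<dots> < x - 1"
  proof -
    have "sqrt x \<noteq> 1" using assms by auto
    hence "0 < (sqrt x - 1)^2" by simp
    also have "(sqrt x - 1)^2 = x - 2 * sqrt x + 1" using assms by (simp add: power2_eq_square algebra_simps)
    finally show ?thesis by simp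
  qed
  finally show ?thesis .
qed

lemma young_gen:
  fixes u v a :: real
  assumes "0 < u" "0 < v" "0 < a" "a < 1"
  shows "u powr a * v powr (1-a) \<le> a*u + (1-a)*v"
    and "u \<noteq> v \<Longrightarrow> u powr a * v powr (1-a) < a*u + (1-a)*v"
proof -
  define A where "A = a*u + (1-a)*v"
  have A: "0 < A" using assms unfolding A_def by (simp add: add_pos_pos)
  have e: "u powr a * v powr (1-a) = exp (a * ln u + (1-a) * ln v)"
    using assms by (simp add: powr_def exp_add)
  have lnd: "a * ln u + (1-a) * ln v = ln A + (a * ln (u/A) + (1-a) * ln (v/A))"
    using assms A by (simp add: ln_div algebra_simps)
  have sum0: "a * (u/A - 1) + (1-a) * (v/A - 1) = 0"
    using A unfolding A_def by (simp add: field_simps)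
  have l1: "a * ln (u/A) \<le> a * (u/A - 1)"
    using ln_le_minus_one[of "u/A"] assms A by (intro mult_left_mono) auto
  have l2: "(1-a) * ln (v/A) \<le> (1-a) * (v/A - 1)"
    using ln_le_minus_one[of "v/A"] assms A by (intro mult_left_mono) auto
  have "a * ln u + (1-a) * ln v \<le> ln A" using lnd l1 l2 sum0 by linarith
  hence "exp (a * ln u + (1-a) * ln v) \<le> A" using A by (metis exp_le_cancel_iff exp_ln)
  thus "u powr a * v powr (1-a) \<le> a*u + (1-a)*v" using e A_def by simp
  assume "u \<noteq> v"
  have "u \<noteq> A"
  proof
    assume "u = A"
    hence "(1-a) * u = (1-a) * v" unfolding A_def by (simp add: algebra_simps)
    thus False using \<open>u \<noteq> v\<close> assms by simp
  qed
  hence "u/A \<noteq> 1" using A by simp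
  hence "ln (u/A) < u/A - 1" using ln_strict[of "u/A"] assms A by simp
  hence l1': "a * ln (u/A) < a * (u/A - 1)" using assms by simp
  have "a * ln u + (1-a) * ln v < ln A" using lnd l1' l2 sum0 by linarith
  hence "exp (a * ln u + (1-a) * ln v) < A" using A by (metis exp_less_cancel_iff exp_ln)
  thus "u powr a * v powr (1-a) < a*u + (1-a)*v" using e A_def by simp
qed

lemma cd_bound:
  fixes p q P Q a :: real
  assumes "0 < a" "a < 1" "0 \<le> p" "0 \<le> q" "0 < P" "0 < Q" "p/P + q/Q \<le> 1"
  shows "p powr a * q powr (1-a) \<le> (a*P) powr a * ((1-a)*Q) powr (1-a)"
proof (cases "p = 0 \<or> q = 0")
  case True
  then show ?thesis using assms by (auto intro!: mult_nonneg_nonneg)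
next
  case False
  define u where "u = p/(a*P)"
  define v where "v = q/((1-a)*Q)"
  have u: "0 < u" and v: "0 < v" using False assms unfolding u_def v_def by auto
  have pu: "p = (a*P) * u" and qv: "q = ((1-a)*Q) * v" using assms unfolding u_def v_def by auto
  have "u powr a * v powr (1-a) \<le> a*u + (1-a)*v" using young_gen(1)[OF u v assms(1,2)] .
  also have "a*u + (1-a)*v = p/P + q/Q" using assms unfolding u_def v_def by (simp add: field_simps)
  finally have uv: "u powr a * v powr (1-a) \<le> 1" using assms by simp
  have "p powr a * q powr (1-a) = ((a*P) powr a * ((1-a)*Q) powr (1-a)) * (u powr a * v powr (1-a))"
    unfolding pu qv using assms u v by (simp add: powr_mult)
  also have "\<dots> \<le> ((a*P) powr a * ((1-a)*Q) powr (1-a)) * 1"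
    by (rule mult_left_mono[OF uv]) simp
  finally show ?thesis by simp
qed



lemma phi_strict_mono:
  fixes z1 z2 a m :: real
  assumes n: "n \<ge> 2" and a: "0 < a" "a < 1" and z: "z1 < z2"
    and b1: "0 < m + (real n - 1) / real n * (1 - z2)"
    and b2: "0 < 1 + real n * m / (real n - 1) - z2"
  shows "phi n m a z2 < phi n m a z1"
proof -
  have N: "real n \<ge> 2" using n by simp
  have "(real n - 1) / real n * (1 - z2) < (real n - 1) / real n * (1 - z1)"
    using z N by (intro mult_strict_left_mono) auto
  hence c1: "m + (real n - 1) / real n * (1 - z2) < m + (real n - 1) / real n * (1 - z1)" by simp
  have c2: "1 + real n * m / (real n - 1) - z2 < 1 + real n * m / (real n - 1) - z1" using z by simp
  have p1: "(m + (real n - 1) / real n * (1 - z2)) powr a < (m + (real n - 1) / real n * (1 - z1)) powr a"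
    using c1 b1 a by (intro powr_less_mono2) auto
  have p2: "(1 + real n * m / (real n - 1) - z2) powr (1-a) < (1 + real n * m / (real n - 1) - z1) powr (1-a)"
    using c2 b2 a by (intro powr_less_mono2) auto
  have "(m + (real n - 1) / real n * (1 - z2)) powr a * (1 + real n * m / (real n - 1) - z2) powr (1-a)
      < (m + (real n - 1) / real n * (1 - z1)) powr a * (1 + real n * m / (real n - 1) - z1) powr (1-a)"
    using p1 p2 b1 b2 by (intro mult_strict_mono) auto
  thus ?thesis unfolding phi_def by simp
qed

lemma J_props:
  fixes a m :: real
  assumes n: "n \<ge> 2" and a: "0 < a" "a < 1" and m: "0 < m"
  shows "(real n * m - a) / (real n - 1) \<le> J n m a"
    and "J n m a < real n * m / (real n - 1) - a / (real n - a)"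
    and "phi n m a (J n m a) = 0"
proof -
  define N where "N = real n"
  have N: "N \<ge> 2" using n unfolding N_def by simp
  have nz: "N - a \<noteq> 0" "N - 1 \<noteq> 0" "N \<noteq> 0" "(N - 1) * (N - a) \<noteq> 0" "a + N*N - (N + N*a) \<noteq> 0"
  proof -
    have "0 < (N - 1) * (N - a)" using N a by (intro mult_pos_pos) auto
    moreover have "a + N*N - (N + N*a) = (N - 1) * (N - a)" by (simp add: algebra_simps)
    ultimately show "N - a \<noteq> 0" "N - 1 \<noteq> 0" "N \<noteq> 0" "(N - 1) * (N - a) \<noteq> 0" "a + N*N - (N + N*a) \<noteq> 0"
      using N a by auto
  qed
  define lo where "lo = (N * m - a) / (N - 1)"
  define hi where "hi = N * m / (N - 1) - a / (N - a)"
  have h1: "1 + a/(N-a) = N/(N-a)" using nz by (simp add: field_simps)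
  have h2: "(N-1)/N * (N*m/(N-1)) = m" using nz by simp
  have h3: "(N-1)/N * (N/(N-a)) = (N-1)/(N-a)" using nz by simp
  have B2hi: "1 + N * m / (N - 1) - hi = N / (N - a)"
    unfolding hi_def using h1 by simp
  have "(N - 1) / N * (1 - hi) = (N-1)/N * (1 + a/(N-a)) - (N-1)/N * (N*m/(N-1))"
    unfolding hi_def by (simp add: right_diff_distrib distrib_left)
  hence B1hi: "m + (N - 1) / N * (1 - hi) = (N - 1) / (N - a)" using h1 h2 h3 by simp
  have "N * m / (N - 1) - lo = a / (N - 1)"
    unfolding lo_def by (simp add: diff_divide_distrib[symmetric])
  moreover have "1 + a / (N - 1) = (N - 1 + a) / (N - 1)" using nz by (simp add: field_simps)
  ultimately have B2lo: "1 + N * m / (N - 1) - lo = (N - 1 + a) / (N - 1)" by simp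
  have "1 - lo = ((N - 1) - (N*m - a)) / (N - 1)"
    unfolding lo_def using nz by (simp add: diff_divide_distrib)
  hence "(N - 1) / N * (1 - lo) = ((N - 1) - (N*m - a)) / N" using nz by simp
  hence B1lo: "m + (N - 1) / N * (1 - lo) = (N - 1 + a) / N" using nz by (simp add: field_simps)
  have lohi: "lo < hi"
  proof -
    have "a / (N - a) < a / (N - 1)" using N a by (intro divide_strict_left_mono) auto
    thus ?thesis unfolding lo_def hi_def using N by (simp add: diff_divide_distrib)
  qed
  have pos: "0 < m + (N - 1) / N * (1 - z) \<and> 0 < 1 + N * m / (N - 1) - z" if "z \<le> hi" for z
  proof -
    have "(N - 1) / N * (1 - hi) \<le> (N - 1) / N * (1 - z)" using that N by (intro mult_left_mono) auto
    moreover have "0 < (N - 1) / (N - a)" "0 < N / (N - a)" using N a by auto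
    ultimately show ?thesis using B1hi B2hi that by linarith
  qed
  have phihi: "phi n m a hi < 0"
  proof -
    have y: "(N - 1) powr a * N powr (1 - a) < a * (N - 1) + (1 - a) * N"
      using young_gen(2)[of "N-1" N a] N a by auto
    have "phi n m a hi = ((N - 1) / (N - a)) powr a * (N / (N - a)) powr (1 - a) - 1"
      unfolding phi_def N_def[symmetric] using B1hi B2hi by simp
    also have "\<dots> = ((N - 1) powr a * N powr (1 - a)) / ((N - a) powr a * (N - a) powr (1 - a)) - 1"
      using N a by (simp add: powr_divide)
    also have "(N - a) powr a * (N - a) powr (1 - a) = N - a"
      using N a by (simp add: powr_add[symmetric])
    finally have e: "phi n m a hi = ((N - 1) powr a * N powr (1 - a)) / (N - a) - 1" .
    have "((N - 1) powr a * N powr (1 - a)) / (N - a) < 1" using y N a by (simp add: divide_less_eq algebra_simps)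
    thus ?thesis unfolding e by simp
  qed
  have philo: "0 \<le> phi n m a lo"
  proof -
    have y: "N powr a * (N - 1) powr (1 - a) \<le> a * N + (1 - a) * (N - 1)"
      using young_gen(1)[of N "N-1" a] N a by auto
    have "phi n m a lo = ((N - 1 + a) / N) powr a * ((N - 1 + a) / (N - 1)) powr (1 - a) - 1"
      unfolding phi_def N_def[symmetric] using B1lo B2lo by simp
    also have "\<dots> = ((N - 1 + a) powr a * (N - 1 + a) powr (1 - a)) / (N powr a * (N - 1) powr (1 - a)) - 1"
      using N a by (simp add: powr_divide)
    also have "(N - 1 + a) powr a * (N - 1 + a) powr (1 - a) = N - 1 + a"
      using N a by (simp add: powr_add[symmetric])
    finally have e: "phi n m a lo = (N - 1 + a) / (N powr a * (N - 1) powr (1 - a)) - 1" .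
    have "0 < N powr a * (N - 1) powr (1 - a)" using N by simp
    thus ?thesis unfolding e using y N a by (simp add: le_divide_eq algebra_simps)
  qed
  have cont: "\<forall>z. lo \<le> z \<and> z \<le> hi \<longrightarrow> isCont (phi n m a) z"
  proof (intro allI impI)
    fix z assume "lo \<le> z \<and> z \<le> hi"
    hence p: "0 < m + (N - 1) / N * (1 - z)" "0 < 1 + N * m / (N - 1) - z" using pos by auto
    show "isCont (phi n m a) z"
      unfolding phi_def[abs_def] N_def[symmetric] using p N
      by (auto intro!: continuous_intros)
  qed
  obtain z0 where z0: "lo \<le> z0" "z0 \<le> hi" "phi n m a z0 = 0"
    using IVT2[of "phi n m a" hi 0 lo, OF _ _ _ cont] phihi philo lohi by auto
  have uniq: "w = z0" if "lo \<le> w" "w \<le> hi" "phi n m a w = 0" for w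
  proof (rule ccontr)
    assume "w \<noteq> z0"
    then consider "w < z0" | "z0 < w" by linarith
    thus False
    proof cases
      case 1
      have p: "0 < m + (real n - 1) / real n * (1 - z0)" "0 < 1 + real n * m / (real n - 1) - z0"
        using pos[OF z0(2)] unfolding N_def by auto
      have "phi n m a z0 < phi n m a w" by (rule phi_strict_mono[OF n a 1 p])
      thus False using z0 that by simp
    next
      case 2
      have p: "0 < m + (real n - 1) / real n * (1 - w)" "0 < 1 + real n * m / (real n - 1) - w"
        using pos[OF that(2)] unfolding N_def by auto
      have "phi n m a w < phi n m a z0" by (rule phi_strict_mono[OF n a 2 p])
      thus False using z0 that by simp
    qed
  qed
  have Jeq: "J n m a = z0"
    unfolding J_def
  proof (rule the_equality)
    show "(real n * m - a) / (real n - 1) \<le> z0 \<and> z0 \<le> real n * m / (real n - 1) - a / (real n - a) \<and> phi n m a z0 = 0"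
      using z0 unfolding lo_def hi_def N_def by simp
  next
    fix w assume w: "(real n * m - a) / (real n - 1) \<le> w \<and> w \<le> real n * m / (real n - 1) - a / (real n - a) \<and> phi n m a w = 0"
    show "w = z0" by (rule uniq) (use w in \<open>simp_all add: lo_def hi_def N_def\<close>)
  qed
  show "(real n * m - a) / (real n - 1) \<le> J n m a" using Jeq z0 unfolding lo_def N_def by simp
  have "z0 \<noteq> hi" using z0 phihi by auto
  thus "J n m a < real n * m / (real n - 1) - a / (real n - a)" using Jeq z0 unfolding hi_def N_def by simp
  show "phi n m a (J n m a) = 0" using Jeq z0 by simp
qed

lemma phi_nonneg_iff:
  fixes a m z :: real
  assumes n: "n \<ge> 2" and a: "0 < a" "a < 1" and m: "0 < m"
    and b1: "0 < m + (real n - 1) / real n * (1 - z)"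
    and b2: "0 < 1 + real n * m / (real n - 1) - z"
  shows "0 \<le> phi n m a z \<longleftrightarrow> z \<le> J n m a"
proof
  assume h: "0 \<le> phi n m a z"
  show "z \<le> J n m a"
  proof (rule ccontr)
    assume "\<not> z \<le> J n m a"
    hence "J n m a < z" by simp
    from phi_strict_mono[OF n a this b1 b2] J_props(3)[OF n a m] h show False by simp
  qed
next
  assume h: "z \<le> J n m a"
  show "0 \<le> phi n m a z"
  proof (cases "z = J n m a")
    case True thus ?thesis using J_props(3)[OF n a m] by simp
  next
    case False
    hence zl: "z < J n m a" using h by simp
    define N where "N = real n"
    have N: "N \<ge> 2" using n unfolding N_def by simp
    have nz: "N - a \<noteq> 0" "N - 1 \<noteq> 0" "N \<noteq> 0" "(N - 1) * (N - a) \<noteq> 0" "a + N*N - (N + N*a) \<noteq> 0"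
  proof -
    have "0 < (N - 1) * (N - a)" using N a by (intro mult_pos_pos) auto
    moreover have "a + N*N - (N + N*a) = (N - 1) * (N - a)" by (simp add: algebra_simps)
    ultimately show "N - a \<noteq> 0" "N - 1 \<noteq> 0" "N \<noteq> 0" "(N - 1) * (N - a) \<noteq> 0" "a + N*N - (N + N*a) \<noteq> 0"
      using N a by auto
  qed
    define hi where "hi = N * m / (N - 1) - a / (N - a)"
    have Jhi: "J n m a < hi" using J_props(2)[OF n a m] unfolding hi_def N_def .
    have h1: "1 + a/(N-a) = N/(N-a)" using nz by (simp add: field_simps)
    have h2: "(N-1)/N * (N*m/(N-1)) = m" using nz by simp
    have h3: "(N-1)/N * (N/(N-a)) = (N-1)/(N-a)" using nz by simp
    have B2hi: "1 + N * m / (N - 1) - hi = N / (N - a)"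
      unfolding hi_def using h1 by simp
    have "(N - 1) / N * (1 - hi) = (N-1)/N * (1 + a/(N-a)) - (N-1)/N * (N*m/(N-1))"
      unfolding hi_def by (simp add: right_diff_distrib distrib_left)
    hence B1hi: "m + (N - 1) / N * (1 - hi) = (N - 1) / (N - a)" using h1 h2 h3 by simp
    have "(N - 1) / N * (1 - hi) \<le> (N - 1) / N * (1 - J n m a)" using Jhi N by (intro mult_left_mono) auto
    moreover have "0 < (N - 1) / (N - a)" "0 < N / (N - a)" using N a by auto
    ultimately have p: "0 < m + (N - 1) / N * (1 - J n m a)" "0 < 1 + N * m / (N - 1) - J n m a"
      using B1hi B2hi Jhi by linarith+
    show ?thesis using phi_strict_mono[OF n a zl p[unfolded N_def]] J_props(3)[OF n a m] by simp
  qed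
qed



lemma player:
  fixes a m d x z :: real
  assumes n: "n \<ge> 2" and a: "0 < a" "a < 1" and m: "0 < m" and d: "0 < d" and x: "0 < x"
    and xe: "x * (real n - a) = (real n - 1) * a - real n * (1 - a) * d"
    and ze: "z = (real n * (m - d) - x) / (real n - 1)"
  defines "U \<equiv> \<lambda>y. (y + max (m - ((real n - 1) * z + y) / real n) 0) powr a * (1 - y) powr (1 - a)"
  shows "x < 1" and "(\<forall>y. 0 \<le> y \<longrightarrow> y \<le> 1 \<longrightarrow> U y \<le> U x) \<longleftrightarrow> z \<le> J n m a"
proof -
  define N where "N = real n"
  have N: "N \<ge> 2" using n unfolding N_def by simp
  have nz: "N - a \<noteq> 0" "N - 1 \<noteq> 0" "N \<noteq> 0" using N a by auto
  define W where "W = N - 1 + N * d + x"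
  have W: "0 < W" unfolding W_def using N d x by (simp add: add_pos_pos)
  have zN: "(N - 1) * z = N * (m - d) - x" unfolding ze N_def[symmetric] using nz by simp
  define B1 where "B1 = m + (N - 1) / N * (1 - z)"
  define B2 where "B2 = 1 + N * m / (N - 1) - z"
  have "N * ((N - 1) / N * (1 - z)) = (N - 1) * (1 - z)" using nz by simp
  hence "N * B1 = N * m + (N - 1) - (N - 1) * z" unfolding B1_def by (simp add: distrib_left algebra_simps)
  hence "N * B1 = W" unfolding zN W_def by (simp add: algebra_simps)
  hence B1: "B1 = W / N" using nz by (simp add: field_simps)
  have "(N - 1) * (N * m / (N - 1)) = N * m" using nz by simp
  hence "(N - 1) * B2 = (N - 1) + N * m - (N - 1) * z" unfolding B2_def by (simp add: distrib_left algebra_simps)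
  hence "(N - 1) * B2 = W" unfolding zN W_def by (simp add: algebra_simps)
  hence B2: "B2 = W / (N - 1)" using nz by (simp add: field_simps)
  have B1p: "0 < B1" and B2p: "0 < B2" unfolding B1 B2 using W N by auto
  have xeN: "x * (N - a) = (N - 1) * a - N * (1 - a) * d" using xe unfolding N_def .
  have "N * (x + d) - a * W = x * (N - a) - ((N - 1) * a - N * (1 - a) * d)"
    unfolding W_def by (simp add: algebra_simps)
  hence "N * (x + d) = a * W" using xeN by simp
  hence Gx: "x + d = a * B1" unfolding B1 using nz by (simp add: field_simps)
  have "(N - 1) * (1 - x) - (1 - a) * W = - (x * (N - a) - ((N - 1) * a - N * (1 - a) * d))"
    unfolding W_def by (simp add: algebra_simps)
  hence "(N - 1) * (1 - x) = (1 - a) * W" using xeN by simp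
  hence Qx: "1 - x = (1 - a) * B2" unfolding B2 using nz by (simp add: field_simps)
  have "0 < (1 - a) * B2" using a B2p by (intro mult_pos_pos) auto
  thus x1: "x < 1" using Qx by simp
  have avx: "m - ((N - 1) * z + x) / N = d" unfolding zN using nz by (simp add: field_simps)
  have UN: "U = (\<lambda>y. (y + max (m - ((N - 1) * z + y) / N) 0) powr a * (1 - y) powr (1 - a))"
    unfolding U_def N_def ..
  define K where "K = a powr a * (1 - a) powr (1 - a)"
  have K: "0 < K" unfolding K_def using a by simp
  have phie: "phi n m a z = B1 powr a * B2 powr (1 - a) - 1"
    unfolding phi_def B1_def B2_def N_def ..
  have Ux: "U x = K * (phi n m a z + 1)"
  proof -
    have "U x = (x + d) powr a * (1 - x) powr (1 - a)" unfolding UN using avx d by simp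
    also have "\<dots> = (a * B1) powr a * ((1 - a) * B2) powr (1 - a)" unfolding Gx Qx ..
    also have "\<dots> = K * (phi n m a z + 1)" unfolding phie K_def using a B1p B2p
      by (simp add: powr_mult)
    finally show ?thesis .
  qed
  have bound: "U y \<le> K * max 1 (phi n m a z + 1)" if y: "0 \<le> y" "y \<le> 1" for y
  proof (cases "0 \<le> m - ((N - 1) * z + y) / N")
    case True
    define G where "G = y + (m - ((N - 1) * z + y) / N)"
    have UG: "U y = G powr a * (1 - y) powr (1 - a)" unfolding UN G_def using True by simp
    have "N * G = N * y + N * m - ((N - 1) * z + y)" unfolding G_def using nz by (simp add: field_simps)
    hence NG: "N * G + (N - 1) * (1 - y) = W" unfolding zN W_def by (simp add: algebra_simps)
    have "G / B1 + (1 - y) / B2 = (N * G + (N - 1) * (1 - y)) / W"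
      unfolding B1 B2 using nz W by (simp add: field_simps)
    hence s1: "G / B1 + (1 - y) / B2 \<le> 1" unfolding NG using W by simp
    have "U y \<le> (a * B1) powr a * ((1 - a) * B2) powr (1 - a)"
      unfolding UG using cd_bound[OF a _ _ B1p B2p s1] True y by (simp add: G_def)
    also have "\<dots> = K * (phi n m a z + 1)" unfolding phie K_def using a B1p B2p
      by (simp add: powr_mult)
    also have "\<dots> \<le> K * max 1 (phi n m a z + 1)" using K by (intro mult_left_mono) auto
    finally show ?thesis .
  next
    case False
    have UG: "U y = y powr a * (1 - y) powr (1 - a)" unfolding UN using False by simp
    have "U y \<le> (a * 1) powr a * ((1 - a) * 1) powr (1 - a)"
      unfolding UG using cd_bound[OF a _ _ _ _, of y "1 - y" 1 1] y by simp
    also have "\<dots> = K * 1" unfolding K_def by simp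
    also have "\<dots> \<le> K * max 1 (phi n m a z + 1)" using K by (intro mult_left_mono) auto
    finally show ?thesis .
  qed
  have Ua: "K \<le> U a"
  proof -
    have "a \<le> a + max (m - ((N - 1) * z + a) / N) 0" by simp
    hence "a powr a \<le> (a + max (m - ((N - 1) * z + a) / N) 0) powr a"
      using a by (intro powr_mono2) auto
    thus ?thesis unfolding UN K_def by (intro mult_right_mono) auto
  qed
  have iffphi: "0 \<le> phi n m a z \<longleftrightarrow> z \<le> J n m a"
    by (rule phi_nonneg_iff[OF n a m]) (use B1p B2p in \<open>simp_all add: B1_def B2_def N_def\<close>)
  show "(\<forall>y. 0 \<le> y \<longrightarrow> y \<le> 1 \<longrightarrow> U y \<le> U x) \<longleftrightarrow> z \<le> J n m a"
  proof
    assume h: "\<forall>y. 0 \<le> y \<longrightarrow> y \<le> 1 \<longrightarrow> U y \<le> U x"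
    have "U a \<le> U x" using h a by simp
    hence "K \<le> K * (phi n m a z + 1)" using Ua Ux by linarith
    hence "0 \<le> K * phi n m a z" by (simp add: algebra_simps)
    hence "0 \<le> phi n m a z" using K by (simp add: zero_le_mult_iff)
    thus "z \<le> J n m a" using iffphi by simp
  next
    assume "z \<le> J n m a"
    hence "0 \<le> phi n m a z" using iffphi by simp
    hence "max 1 (phi n m a z + 1) = phi n m a z + 1" by simp
    thus "\<forall>y. 0 \<le> y \<longrightarrow> y \<le> 1 \<longrightarrow> U y \<le> U x" using bound Ux by simp
  qed
qed



lemma sum_upd:
  fixes f :: "nat \<Rightarrow> real"
  assumes "i < n"
  shows "(\<Sum>j<n. (f(i := y)) j) = (\<Sum>j<n. f j) - f i + y"
proof -
  have fin: "finite {..<n}" and mem: "i \<in> {..<n}" using assms by auto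
  have "(\<Sum>j<n. (f(i := y)) j) = (f(i := y)) i + (\<Sum>j\<in>{..<n} - {i}. (f(i := y)) j)"
    by (rule sum.remove[OF fin mem])
  also have "(\<Sum>j\<in>{..<n} - {i}. (f(i := y)) j) = (\<Sum>j\<in>{..<n} - {i}. f j)"
    by (rule sum.cong) auto
  also have "(\<Sum>j<n. f j) = f i + (\<Sum>j\<in>{..<n} - {i}. f j)"
    by (rule sum.remove[OF fin mem])
  ultimately show ?thesis by simp
qed

lemma lb_equiv:
  fixes N a d m x z J :: real
  assumes N: "N \<ge> 2" and a: "0 < a" "a < 1"
    and xe: "x * (N - a) = (N - 1) * a - N * (1 - a) * d"
    and ze: "z = (N * (m - d) - x) / (N - 1)"
  shows "(N - a) * (N * m / (N - 1) - J) - a \<le> N * d \<longleftrightarrow> z \<le> J"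
proof -
  have N1: "0 < N - 1" and Na: "0 < N - a" using N a by auto
  have "z \<le> J \<longleftrightarrow> N * (m - d) - x \<le> (N - 1) * J" unfolding ze using N1
    by (simp add: pos_divide_le_eq mult.commute)
  also have "\<dots> \<longleftrightarrow> (N - a) * (N * (m - d) - x) \<le> (N - a) * ((N - 1) * J)"
    using Na by simp
  finally have e1: "z \<le> J \<longleftrightarrow> (N - a) * (N * (m - d) - x) - (N - a) * ((N - 1) * J) \<le> 0" by simp
  have "(N - a) * (N * m / (N - 1) - J) - a \<le> N * d \<longleftrightarrow>
        (N - 1) * ((N - a) * (N * m / (N - 1) - J) - a) \<le> (N - 1) * (N * d)"
    using N1 by simp
  also have "(N - 1) * ((N - a) * (N * m / (N - 1) - J) - a) = (N - a) * (N * m - (N - 1) * J) - (N - 1) * a"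
  proof -
    define Q where "Q = N * m / (N - 1)"
    have Q: "(N - 1) * Q = N * m" unfolding Q_def using N1 by simp
    have "(N - 1) * ((N - a) * (Q - J) - a) = (N - a) * ((N - 1) * Q - (N - 1) * J) - (N - 1) * a"
      by (simp add: algebra_simps)
    thus ?thesis unfolding Q unfolding Q_def .
  qed
  finally have e2: "(N - a) * (N * m / (N - 1) - J) - a \<le> N * d \<longleftrightarrow>
        (N - a) * (N * m - (N - 1) * J) - (N - 1) * a - (N - 1) * (N * d) \<le> 0" by simp
  have "(N - a) * (N * (m - d) - x) - (N - a) * ((N - 1) * J)
      = (N - a) * (N * m - (N - 1) * J) - (N - a) * N * d - x * (N - a)"
    by (simp add: algebra_simps)
  also have "\<dots> = (N - a) * (N * m - (N - 1) * J) - (N - 1) * a - (N - 1) * (N * d)"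
    unfolding xe by (simp add: algebra_simps)
  finally show ?thesis using e1 e2 by simp
qed

lemma pos_equiv:
  fixes N a d x :: real
  assumes N: "N \<ge> 2" and a: "0 < a" "a < 1"
    and xe: "x * (N - a) = (N - 1) * a - N * (1 - a) * d"
  shows "0 < x \<longleftrightarrow> N * d < (N - 1) * a / (1 - a)"
proof -
  have Na: "0 < N - a" using N a by auto
  have "0 < x \<longleftrightarrow> 0 < x * (N - a)" using Na by (simp add: zero_less_mult_iff)
  also have "\<dots> \<longleftrightarrow> N * d * (1 - a) < (N - 1) * a" unfolding xe by (simp add: algebra_simps)
  also have "\<dots> \<longleftrightarrow> N * d < (N - 1) * a / (1 - a)" using a by (simp add: less_divide_eq)
  finally show ?thesis .
qed

lemma g_mono:
  fixes N a b :: real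
  assumes "N \<ge> 2" "0 < a" "a \<le> b" "b < 1"
  shows "(N - 1) * a / (1 - a) \<le> (N - 1) * b / (1 - b)"
proof -
  have "(N - 1) * a * (1 - b) \<le> (N - 1) * b * (1 - a)"
  proof -
    have "(N - 1) * a * (1 - b) - (N - 1) * b * (1 - a) = (N - 1) * (a - b)" by (simp add: algebra_simps)
    moreover have "(N - 1) * (a - b) \<le> 0" using assms by (simp add: mult_nonneg_nonpos)
    ultimately show ?thesis by simp
  qed
  thus ?thesis using assms by (simp add: divide_simps)
qed



theorem mainTheorem12:
  fixes n :: nat and \<alpha> :: "nat \<Rightarrow> real" and m :: real
  assumes "n \<ge> 2"
    and "\<forall>i<n. 0 < \<alpha> i \<and> \<alpha> i < 1"
    and "0 < m" and "m < 1"
  shows "curved_interior_NE n \<alpha> m (x_star n \<alpha> m) \<longleftrightarrow>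
    (Max ((\<lambda>i. (real n - \<alpha> i) * (real n * m / (real n - 1) - J n m (\<alpha> i)) - \<alpha> i) ` {..<n})
        \<le> real n * (m - xbar_star n \<alpha> m)
     \<and> real n * (m - xbar_star n \<alpha> m)
        < (real n - 1) * Min (\<alpha> ` {..<n}) / (1 - Min (\<alpha> ` {..<n})))"
proof -
  note n = assms(1) and al = assms(2) and m = assms(3)
  define N where "N = real n"
  have N: "N \<ge> 2" using n unfolding N_def by simp
  have nz: "N - 1 \<noteq> 0" "N \<noteq> 0" using N by auto
  define xb where "xb = xbar_star n \<alpha> m"
  define d where "d = m - xb"
  define xs where "xs = x_star n \<alpha> m"
  define H where "H = (\<Sum>i<n. 1 / (N - \<alpha> i))"
  have "0 \<in> {..<n}" using n by simp
  hence ne: "{..<n} \<noteq> {}" by blast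
  have Na: "0 < N - \<alpha> i" if "i < n" for i using al that N by force
  have H1: "1 < H"
  proof -
    have "(\<Sum>i<n. 1 / N) < (\<Sum>i<n. 1 / (N - \<alpha> i))"
    proof (rule sum_strict_mono[OF _ ne])
      fix i assume "i \<in> {..<n}"
      hence "0 < \<alpha> i" "0 < N - \<alpha> i" using al Na by auto
      thus "1 / N < 1 / (N - \<alpha> i)" by (intro divide_strict_left_mono) (use N in auto)
    qed simp
    moreover have "(\<Sum>i<n. 1 / N) = 1" unfolding N_def using nz N_def by simp
    ultimately show ?thesis unfolding H_def by simp
  qed
  have nzH: "H \<noteq> 0" "H - 1 \<noteq> 0" using H1 by auto
  have ah: "alpha_hat n \<alpha> = N * (H - 1) / H"
    unfolding alpha_hat_def H_def[symmetric] N_def[symmetric] using nzH by (simp add: field_simps)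
  have ah2: "1 / alpha_hat n \<alpha> - 1 = (H - N * (H - 1)) / (N * (H - 1))"
    unfolding ah using nzH nz by (simp add: field_simps)
  have xbE: "xb = 1 - m * (H - N * (H - 1)) / ((N - 1) * (H - 1))"
  proof -
    have p: "(N - 1) * (H - 1) \<noteq> 0" "N * (H - 1) \<noteq> 0" using nzH nz by auto
    have "N * m / (N - 1) * ((H - N * (H - 1)) / (N * (H - 1))) = m * (H - N * (H - 1)) / ((N - 1) * (H - 1))"
      using nz nzH p by (simp add: divide_simps)
    thus ?thesis unfolding xb_def xbar_star_def ah2 N_def[symmetric] by simp
  qed
  have key: "(1 + d) * (N - 1) * (H - 1) = m"
  proof -
    have "(1 + d) * (N - 1) * (H - 1) = (m + m * (H - N * (H - 1)) / ((N - 1) * (H - 1))) * ((N - 1) * (H - 1))"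
      unfolding d_def xbE by (simp add: algebra_simps)
    also have "\<dots> = m * ((N - 1) * (H - 1)) + m * (H - N * (H - 1))"
      using nzH nz by (simp add: distrib_right)
    also have "\<dots> = m" by (simp add: algebra_simps)
    finally show ?thesis .
  qed
  have xe: "xs i * (N - \<alpha> i) = (N - 1) * \<alpha> i - N * (1 - \<alpha> i) * d" if "i < n" for i
    unfolding xs_def x_star_def xb_def[symmetric] d_def[symmetric] N_def[symmetric]
    using Na[OF that] by simp
  have xsum: "(\<Sum>j<n. xs j) = N * xb"
  proof -
    have "xs i = ((N - 1) * N * (1 + d)) * (1 / (N - \<alpha> i)) - ((N - 1) + N * d)" if "i < n" for i
    proof -
      have "xs i = ((N - 1) * \<alpha> i - N * (1 - \<alpha> i) * d) / (N - \<alpha> i)"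
        using xe[OF that] Na[OF that] by (simp add: eq_divide_eq)
      thus ?thesis using Na[OF that] by (simp add: field_simps)
    qed
    hence "(\<Sum>j<n. xs j) = (\<Sum>j<n. ((N - 1) * N * (1 + d)) * (1 / (N - \<alpha> j)) - ((N - 1) + N * d))"
      by (intro sum.cong) auto
    also have "\<dots> = ((N - 1) * N * (1 + d)) * H - N * ((N - 1) + N * d)"
      unfolding sum_subtractf sum_distrib_left[symmetric] H_def by (simp add: N_def)
    also have "\<dots> = N * (m - d)"
      unfolding key[symmetric] by (simp add: algebra_simps)
    finally show ?thesis unfolding d_def by simp
  qed
  have avgx: "avg n xs = xb" unfolding avg_def xsum N_def[symmetric] using nz by simp
  define z where "z = (\<lambda>i. (N * (m - d) - xs i) / (N - 1))"
  have pay: "payoff n \<alpha> m (xs(i := y)) i =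
     (y + max (m - ((real n - 1) * z i + y) / real n) 0) powr \<alpha> i * (1 - y) powr (1 - \<alpha> i)"
    if "i < n" for i y
  proof -
    have "(N - 1) * z i = N * (m - d) - xs i" unfolding z_def using nz by simp
    hence "avg n (xs(i := y)) = ((N - 1) * z i + y) / N"
      unfolding avg_def sum_upd[OF that] xsum N_def[symmetric] d_def by simp
    thus ?thesis unfolding payoff_def grade_def N_def by simp
  qed
  have lb: "(real n - \<alpha> i) * (real n * m / (real n - 1) - J n m (\<alpha> i)) - \<alpha> i \<le> real n * d
      \<longleftrightarrow> z i \<le> J n m (\<alpha> i)" if "i < n" for i
  proof -
    have a: "0 < \<alpha> i" "\<alpha> i < 1" using al that by auto
    have ze: "z i = (N * (m - d) - xs i) / (N - 1)" unfolding z_def ..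
    show ?thesis using lb_equiv[OF N a xe[OF that] ze, where J="J n m (\<alpha> i)"] unfolding N_def .
  qed
  have pe: "0 < xs i \<longleftrightarrow> real n * d < (real n - 1) * \<alpha> i / (1 - \<alpha> i)" if "i < n" for i
    using pos_equiv[OF N _ _ xe[OF that]] al that unfolding N_def by auto
  have NE_iff: "(\<forall>y. 0 \<le> y \<longrightarrow> y \<le> 1 \<longrightarrow> payoff n \<alpha> m (xs(i := y)) i \<le> payoff n \<alpha> m xs i)
      \<longleftrightarrow> z i \<le> J n m (\<alpha> i)"
    and xlt1: "xs i < 1"
    if "i < n" "0 < d" "0 < xs i" for i
  proof -
    have a: "0 < \<alpha> i" "\<alpha> i < 1" using al that by auto
    have xe': "xs i * (real n - \<alpha> i) = (real n - 1) * \<alpha> i - real n * (1 - \<alpha> i) * d"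
      using xe[OF that(1)] unfolding N_def .
    have ze: "z i = (real n * (m - d) - xs i) / (real n - 1)" unfolding z_def N_def ..
    note P = player[OF n a m that(2) that(3) xe' ze]
    show "xs i < 1" using P(1) .
    have px: "payoff n \<alpha> m xs i = payoff n \<alpha> m (xs(i := xs i)) i" by simp
    show "(\<forall>y. 0 \<le> y \<longrightarrow> y \<le> 1 \<longrightarrow> payoff n \<alpha> m (xs(i := y)) i \<le> payoff n \<alpha> m xs i)
      \<longleftrightarrow> z i \<le> J n m (\<alpha> i)"
      unfolding px pay[OF that(1)] using P(2) by simp
  qed
  define T where "T = (\<lambda>i. (real n - \<alpha> i) * (real n * m / (real n - 1) - J n m (\<alpha> i)) - \<alpha> i)"
  have Tpos: "0 < T i" if "i < n" for i
  proof -
    have a: "0 < \<alpha> i" "\<alpha> i < 1" using al that by auto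
    have "J n m (\<alpha> i) < N * m / (N - 1) - \<alpha> i / (N - \<alpha> i)" using J_props(2)[OF n a m] unfolding N_def .
    hence "\<alpha> i / (N - \<alpha> i) < N * m / (N - 1) - J n m (\<alpha> i)" by simp
    hence "(N - \<alpha> i) * (\<alpha> i / (N - \<alpha> i)) < (N - \<alpha> i) * (N * m / (N - 1) - J n m (\<alpha> i))"
      using Na[OF that] by (rule mult_strict_left_mono)
    hence "\<alpha> i < (N - \<alpha> i) * (N * m / (N - 1) - J n m (\<alpha> i))" using Na[OF that] by simp
    thus ?thesis unfolding T_def N_def by simp
  qed
  have fin: "finite {..<n}" by simp
  have MaxI: "Max (T ` {..<n}) \<le> real n * d \<longleftrightarrow> (\<forall>i<n. T i \<le> real n * d)"
    using fin ne by (auto simp add: Max_le_iff)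
  obtain k where k: "k < n" "\<alpha> k = Min (\<alpha> ` {..<n})"
  proof -
    have "Min (\<alpha> ` {..<n}) \<in> \<alpha> ` {..<n}" using fin ne by (intro Min_in) auto
    then obtain k where "k \<in> {..<n}" "Min (\<alpha> ` {..<n}) = \<alpha> k" by blast
    thus ?thesis using that by auto
  qed
  have kle: "\<alpha> k \<le> \<alpha> i" if "i < n" for i using k that fin by simp
  have MinI: "real n * d < (real n - 1) * Min (\<alpha> ` {..<n}) / (1 - Min (\<alpha> ` {..<n}))
      \<longleftrightarrow> (\<forall>i<n. 0 < xs i)"
  proof
    assume h: "real n * d < (real n - 1) * Min (\<alpha> ` {..<n}) / (1 - Min (\<alpha> ` {..<n}))"
    show "\<forall>i<n. 0 < xs i"
    proof (intro allI impI)
      fix i assume i: "i < n"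
      have "(real n - 1) * \<alpha> k / (1 - \<alpha> k) \<le> (real n - 1) * \<alpha> i / (1 - \<alpha> i)"
        using g_mono[of "real n" "\<alpha> k" "\<alpha> i"] n al kle[OF i] i k(1) by auto
      thus "0 < xs i" using pe[OF i] h k(2) by simp
    qed
  next
    assume "\<forall>i<n. 0 < xs i"
    thus "real n * d < (real n - 1) * Min (\<alpha> ` {..<n}) / (1 - Min (\<alpha> ` {..<n}))"
      using pe[OF k(1)] k by simp
  qed
  have "curved_interior_NE n \<alpha> m xs \<longleftrightarrow> (\<forall>i<n. T i \<le> real n * d) \<and> (\<forall>i<n. 0 < xs i)"
  proof
    assume h: "curved_interior_NE n \<alpha> m xs"
    hence d0: "0 < d" and xp: "\<forall>i<n. 0 < xs i" and ne: "pure_NE n \<alpha> m xs"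
      unfolding curved_interior_NE_def avgx d_def by auto
    have "T i \<le> real n * d" if i: "i < n" for i
    proof -
      have "\<forall>y. 0 \<le> y \<longrightarrow> y \<le> 1 \<longrightarrow> payoff n \<alpha> m (xs(i := y)) i \<le> payoff n \<alpha> m xs i"
        using ne i unfolding pure_NE_def by blast
      hence "z i \<le> J n m (\<alpha> i)" using NE_iff[OF i d0] xp i by blast
      thus ?thesis using lb[OF i] unfolding T_def by simp
    qed
    thus "(\<forall>i<n. T i \<le> real n * d) \<and> (\<forall>i<n. 0 < xs i)" using xp by simp
  next
    assume h: "(\<forall>i<n. T i \<le> real n * d) \<and> (\<forall>i<n. 0 < xs i)"
    have "0 < T 0" using Tpos n by simp
    hence "0 < real n * d" using h n by force
    hence d0: "0 < d" using N N_def by (simp add: zero_less_mult_iff)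
    have xp: "\<forall>i<n. 0 < xs i" using h by simp
    have "pure_NE n \<alpha> m xs"
      unfolding pure_NE_def
    proof (intro conjI allI impI)
      fix i assume i: "i < n"
      show "0 \<le> xs i" using xp i by (simp add: less_imp_le)
      show "xs i \<le> 1" using xlt1[OF i d0] xp i by (simp add: less_imp_le)
    next
      fix i and y :: real assume i: "i < n" and y: "0 \<le> y" "y \<le> 1"
      have "z i \<le> J n m (\<alpha> i)" using lb[OF i] h i unfolding T_def by simp
      thus "payoff n \<alpha> m (xs(i := y)) i \<le> payoff n \<alpha> m xs i"
        using NE_iff[OF i d0] xp i y by blast
    qed
    thus "curved_interior_NE n \<alpha> m xs" unfolding curved_interior_NE_def avgx using d0 xp d_def by simp
  qed
  hence fin2: "curved_interior_NE n \<alpha> m xs \<longleftrightarrow> Max (T ` {..<n}) \<le> real n * d \<and>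
      real n * d < (real n - 1) * Min (\<alpha> ` {..<n}) / (1 - Min (\<alpha> ` {..<n}))"
    using MaxI MinI by simp
  show ?thesis using fin2 unfolding T_def d_def xb_def xs_def .
qed

end
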